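(* Let $q$ be a prime power. (i) If $C$ is an $[n,k,d]$ linear code over $\mathbb{F}_q$ whose Euclidean hull $C\cap C^{\perp_E}$ has dimension $l$, then there exists a set $T$ of $l$ coordinate positions such that the shortened code $C_T$ of $C$ on $T$ is a Euclidean LCD $[n-l,k-l,d']$ code with $d'\ge d$. (ii) If $C$ is an $[n,k,d]$ linear code over $\mathbb{F}_{q^2}$ whose Hermitian hull $C\cap C^{\perp_H}$ has dimension $l$, then there exists a set $T$ of $l$ coordinate positions such that the shortened code $C_T$ of $C$ on $T$ is a Hermitian LCD $[n-l,k-l,d']$ code with $d'\ge d$.
   Context: An $[n,k,d]$ linear code over a finite field $F$ is a $k$-dimensional subspace of $F^n$ with minimum nonzero Hamming weight $d$. Euclidean inner product on $\mathbb{F}_q^n$: $\langle x,y\rangle_E=\sum x_iy_i$; Hermitian inner product on $\mathbb{F}_{q^2}^n$: $\langle x,y\rangle_H=\sum x_iy_i^q$; $C^{\perp_E}$, $C^{\perp_H}$ are the corresponding dual codes. The (Euclidean/Hermitian) hull of $C$ is $C\cap C^{\perp}$; $C$ is (Euclidean/Hermitian) LCD if its hull is $\{0\}$. For a set $T$ of $t$ coordinate positions, let $C(T)$ be the subcode of codewords that are $0$ on all positions of $T$; the shortened code $C_T$ is obtained from $C(T)$ by deleting the coordinates in $T$, and has length $n-t$. *)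

theory Defs
  imports Main "HOL-Computational_Algebra.Primes" "HOL-Library.Function_Algebras" "HOL-Library.Extended_Nat"
begin

text \<open>Vectors with coordinates indexed by a finite set I of positions are
functions nat => 'a vanishing outside I (so the ambient space is F^I, of
length card I).\<close>

definition vecs :: "nat set \<Rightarrow> (nat \<Rightarrow> 'a::zero) set" where
  "vecs I = {x. \<forall>i. i \<notin> I \<longrightarrow> x i = 0}"

definition sc :: "'a::times \<Rightarrow> (nat \<Rightarrow> 'a) \<Rightarrow> (nat \<Rightarrow> 'a)" where
  "sc c x = (\<lambda>i. c * x i)"

definition lin_code :: "nat set \<Rightarrow> (nat \<Rightarrow> 'a::field) set \<Rightarrow> bool" where
  "lin_code I C \<longleftrightarrow> finite I \<and> C \<subseteq> vecs I \<and> 0 \<in> C \<and>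
     (\<forall>x\<in>C. \<forall>y\<in>C. x + y \<in> C) \<and> (\<forall>c. \<forall>x\<in>C. sc c x \<in> C)"

definition cdim :: "(nat \<Rightarrow> 'a::field) set \<Rightarrow> nat" where
  "cdim C = vector_space.dim sc C"

definition wt :: "nat set \<Rightarrow> (nat \<Rightarrow> 'a::zero) \<Rightarrow> nat" where
  "wt I x = card {i \<in> I. x i \<noteq> 0}"

text \<open>Minimum nonzero Hamming weight (infinity for the zero code).\<close>
definition min_dist :: "nat set \<Rightarrow> (nat \<Rightarrow> 'a::zero) set \<Rightarrow> enat" where
  "min_dist I C = (INF x\<in>C - {0}. enat (wt I x))"

definition e_ip :: "nat set \<Rightarrow> (nat \<Rightarrow> 'a::comm_ring_1) \<Rightarrow> (nat \<Rightarrow> 'a) \<Rightarrow> 'a" where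
  "e_ip I x y = (\<Sum>i\<in>I. x i * y i)"

definition e_dual :: "nat set \<Rightarrow> (nat \<Rightarrow> 'a::comm_ring_1) set \<Rightarrow> (nat \<Rightarrow> 'a) set" where
  "e_dual I C = {y \<in> vecs I. \<forall>x\<in>C. e_ip I x y = 0}"

definition h_ip :: "nat \<Rightarrow> nat set \<Rightarrow> (nat \<Rightarrow> 'a::comm_ring_1) \<Rightarrow> (nat \<Rightarrow> 'a) \<Rightarrow> 'a" where
  "h_ip q I x y = (\<Sum>i\<in>I. x i * y i ^ q)"

definition h_dual :: "nat \<Rightarrow> nat set \<Rightarrow> (nat \<Rightarrow> 'a::comm_ring_1) set \<Rightarrow> (nat \<Rightarrow> 'a) set" where
  "h_dual q I C = {y \<in> vecs I. \<forall>x\<in>C. h_ip q I x y = 0}"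

definition e_LCD :: "nat set \<Rightarrow> (nat \<Rightarrow> 'a::comm_ring_1) set \<Rightarrow> bool" where
  "e_LCD I C \<longleftrightarrow> C \<inter> e_dual I C = {0}"

definition h_LCD :: "nat \<Rightarrow> nat set \<Rightarrow> (nat \<Rightarrow> 'a::comm_ring_1) set \<Rightarrow> bool" where
  "h_LCD q I C \<longleftrightarrow> C \<inter> h_dual q I C = {0}"

definition shorten :: "nat set \<Rightarrow> (nat \<Rightarrow> 'a::zero) set \<Rightarrow> nat set \<Rightarrow> (nat \<Rightarrow> 'a) set" where
  "shorten I C T = (\<lambda>x. \<lambda>i. if i \<in> I - T then x i else 0) ` {x \<in> C. \<forall>i\<in>T. x i = 0}"

definition prime_power :: "nat \<Rightarrow> bool" where
  "prime_power q \<longleftrightarrow> (\<exists>p m. prime (p::nat) \<and> m \<ge> 1 \<and> q = p ^ m)"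

end

theory Submission
  imports Defs "HOL-Number_Theory.Residues"
begin


lemma card_pow_same:
  fixes x :: "'a::field"
  assumes fin: "finite (UNIV :: 'a set)"
  shows "x ^ card (UNIV :: 'a set) = x"
proof (cases "x = 0")
  case False
  have cpos: "card (UNIV :: 'a set) > 0" using fin by (simp add: finite_UNIV_card_ge_0)
  have "x * (\<Prod>y\<in>UNIV-{0}. x * y) = x * x ^ (card (UNIV :: 'a set) - 1) * \<Prod>(UNIV-{0})"
    using fin by (simp add: prod.distrib mult_ac card_Diff_singleton)
  also have "x * x ^ (card (UNIV :: 'a set) - 1) = x ^ Suc (card (UNIV :: 'a set) - 1)"
    by (subst power_Suc) auto
  also have "Suc (card (UNIV :: 'a set) - 1) = card (UNIV :: 'a set)"
    using cpos by simp
  also have "(\<Prod>y\<in>UNIV-{0}. x * y) = (\<Prod>y\<in>UNIV-{0}. y)"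
    by (rule prod.reindex_bij_witness[of _ "\<lambda>y. y / x" "\<lambda>y. x * y"]) (use False in auto)
  finally show ?thesis
    using fin by simp
qed (use fin finite_UNIV_card_ge_0[where ?'a = 'a] in auto)

lemma frob_facts:
  fixes q :: nat
  assumes pp: "prime_power q" and cardb: "card (UNIV :: 'b::field set) = q ^ 2"
  shows "\<And>(f :: nat \<Rightarrow> 'b) A. (sum f A) ^ q = sum (\<lambda>i. f i ^ q) A"
    and "\<And>x :: 'b. x ^ (q^2) = x" and "q > 0" and "\<And>x y :: 'b. (x + y) ^ q = x ^ q + y ^ q"
proof -
  obtain p m where p: "prime p" "m \<ge> 1" "q = p ^ m" using pp unfolding prime_power_def by blast
  have qpos: "q > 0" using p prime_gt_0_nat by simp
  then show "q > 0" .
  have fin: "finite (UNIV :: 'b set)" by (rule card_ge_0_finite) (simp add: cardb qpos)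
  have cpos: "CHAR('b) > 0" by (rule finite_imp_CHAR_pos[OF fin])
  have cpr: "prime CHAR('b)" using cpos prime_CHAR_semidom by blast
  have "CHAR('b) dvd p ^ (m * 2)" using CHAR_dvd_CARD[where 'a='b] cardb p by (simp add: power_mult)
  then have "CHAR('b) dvd p" using cpr prime_dvd_power by blast
  then have ch: "CHAR('b) = p" using cpr p primes_dvd_imp_eq by blast
  show "\<And>(f :: nat \<Rightarrow> 'b) A. (sum f A) ^ q = sum (\<lambda>i. f i ^ q) A"
    by (rule freshmans_dream_sum'[OF cpr]) (simp add: ch p)
  show "\<And>x y :: 'b. (x + y) ^ q = x ^ q + y ^ q"
    by (rule freshmans_dream'[OF cpr]) (simp add: ch p)
  show "\<And>x :: 'b. x ^ (q^2) = x" using card_pow_same[OF fin] cardb by metis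
qed



lemma vs_sc: "vector_space (sc :: 'a::field \<Rightarrow> (nat \<Rightarrow> 'a) \<Rightarrow> (nat \<Rightarrow> 'a))"
  unfolding vector_space_def sc_def by (auto simp: fun_eq_iff algebra_simps)

interpretation V: vector_space "sc :: 'a::field \<Rightarrow> (nat \<Rightarrow> 'a) \<Rightarrow> (nat \<Rightarrow> 'a)"
  by (rule vs_sc)

lemma cdim_V: "cdim C = V.dim C"
  unfolding cdim_def by simp

lemma sum_apply': "(sum f A) i = sum (\<lambda>a. f a i) A"
  by (induction A rule: infinite_finite_induct) auto

lemma sc_apply[simp]: "sc c x i = c * x i"
  by (simp add: sc_def)

lemma lin_code_subspace: "lin_code I C \<Longrightarrow> V.subspace C"
  unfolding lin_code_def V.subspace_def by auto

lemma vecs_span: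
  assumes "finite I"
  shows "vecs I \<subseteq> V.span ((\<lambda>i. \<lambda>j. if j = i then (1::'a::field) else 0) ` I)"
proof
  fix x :: "nat \<Rightarrow> 'a" assume x: "x \<in> vecs I"
  let ?e = "\<lambda>i. \<lambda>j. if j = i then (1::'a) else 0"
  have "x = (\<Sum>i\<in>I. sc (x i) (?e i))"
  proof
    fix j
    show "x j = (\<Sum>i\<in>I. sc (x i) (?e i)) j"
      using x assms unfolding sum_apply' vecs_def by (cases "j \<in> I") (auto simp: if_distrib cong: if_cong)
  qed
  also have "\<dots> \<in> V.span (?e ` I)"
    by (intro V.span_sum V.span_scale V.span_base) auto
  finally show "x \<in> V.span (?e ` I)" .
qed



lemma decomp:
  fixes C H :: "(nat \<Rightarrow> 'a::field) set"
  assumes lc: "lin_code I C" and HC: "H \<subseteq> C" and Hs: "V.subspace H"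
  shows "\<exists>T. T \<subseteq> I \<and> card T = cdim H \<and> (\<forall>h\<in>H. (\<forall>i\<in>T. h i = 0) \<longrightarrow> h = 0)
     \<and> (\<forall>c\<in>C. \<exists>h\<in>H. \<exists>x\<in>C. (\<forall>i\<in>T. x i = 0) \<and> c = h + x)
     \<and> cdim {x\<in>C. \<forall>i\<in>T. x i = 0} = cdim C - cdim H"
proof -
  have finI: "finite I" and Cv: "C \<subseteq> vecs I" using lc unfolding lin_code_def by auto
  have Cs: "V.subspace C" using lin_code_subspace[OF lc] .
  define P where "P T \<longleftrightarrow> T \<subseteq> I \<and> (\<forall>h\<in>H. (\<forall>i\<in>T. h i = 0) \<longrightarrow> h = 0)" for T
  have "P I" unfolding P_def
  proof (intro conjI ballI impI)
    fix h assume "h \<in> H" "\<forall>i\<in>I. h i = 0"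
    then show "h = 0" using HC Cv unfolding vecs_def by (auto simp: fun_eq_iff)
  qed simp
  then obtain T where PT: "P T" and Tmin: "\<And>T'. P T' \<Longrightarrow> card T \<le> card T'"
    using ex_has_least_nat[of P I card] by blast
  have TI: "T \<subseteq> I" and Tinj: "\<And>h. h \<in> H \<Longrightarrow> \<forall>i\<in>T. h i = 0 \<Longrightarrow> h = 0"
    using PT unfolding P_def by auto
  have finT: "finite T" using TI finI finite_subset by blast
  have "\<forall>t\<in>T. \<exists>h\<in>H. h t \<noteq> 0 \<and> (\<forall>i\<in>T-{t}. h i = 0)"
  proof
    fix t assume t: "t \<in> T"
    have "card (T - {t}) < card T" using t finT by (meson card_Diff1_less)
    then have "\<not> P (T - {t})" using Tmin by fastforce
    then obtain h where h: "h \<in> H" "\<forall>i\<in>T-{t}. h i = 0" "h \<noteq> 0" using TI unfolding P_def by auto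
    have "h t \<noteq> 0"
    proof
      assume "h t = 0"
      then have "\<forall>i\<in>T. h i = 0" using h by auto
      then show False using Tinj h by blast
    qed
    then show "\<exists>h\<in>H. h t \<noteq> 0 \<and> (\<forall>i\<in>T-{t}. h i = 0)" using h by blast
  qed
  then obtain f where f: "\<And>t. t \<in> T \<Longrightarrow> f t \<in> H \<and> f t t \<noteq> 0 \<and> (\<forall>i\<in>T-{t}. f t i = 0)"
    by metis
  define g where "g t = sc (1 / f t t) (f t)" for t
  have gH: "g t \<in> H" if "t \<in> T" for t
    using f[OF that] Hs unfolding g_def V.subspace_def by auto
  have gtt: "g t t = 1" if "t \<in> T" for t
    using f[OF that] unfolding g_def by simp
  have gts: "g t s = 0" if "t \<in> T" "s \<in> T" "s \<noteq> t" for t s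
    using f[OF that(1)] that unfolding g_def by simp
  have ginj: "inj_on g T"
  proof (rule inj_onI)
    fix s t assume "s \<in> T" "t \<in> T" "g s = g t"
    then show "s = t" using gtt gts by (metis zero_neq_one)
  qed
  define proj where "proj c = (\<Sum>t\<in>T. sc (c t) (g t))" for c :: "nat \<Rightarrow> 'a"
  have projH: "proj c \<in> H" for c
    unfolding proj_def using gH by (intro V.subspace_sum[OF Hs]) (auto intro: V.subspace_scale[OF Hs])
  have projspan: "proj c \<in> V.span (g ` T)" for c
    unfolding proj_def by (intro V.span_sum V.span_scale V.span_base) auto
  have projT: "proj c s = c s" if s: "s \<in> T" for c s
  proof -
    have "proj c s = (\<Sum>t\<in>T. c t * g t s)" unfolding proj_def sum_apply' by simp
    also have "\<dots> = c s * g s s + (\<Sum>t\<in>T-{s}. c t * g t s)"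
      using s finT by (simp add: sum.remove)
    also have "(\<Sum>t\<in>T-{s}. c t * g t s) = 0"
      using gts s by (intro sum.neutral) auto
    finally show ?thesis using gtt s by simp
  qed
  define K where "K = {x\<in>C. \<forall>i\<in>T. x i = 0}"
  have Ks: "V.subspace K" using Cs unfolding K_def V.subspace_def by auto
  have dec: "c - proj c \<in> K" if "c \<in> C" for c
    unfolding K_def using that projH HC projT by (auto intro: V.subspace_diff[OF Cs])
  have Hspan: "H \<subseteq> V.span (g ` T)"
  proof
    fix h assume h: "h \<in> H"
    have "h - proj h \<in> H" using h projH by (rule V.subspace_diff[OF Hs])
    moreover have "\<forall>i\<in>T. (h - proj h) i = 0" using projT by simp
    ultimately have "h - proj h = 0" using Tinj by blast
    then have "h = proj h" by simp
    then show "h \<in> V.span (g ` T)" using projspan[of h] by simp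
  qed
  have gind: "V.independent (g ` T)"
  proof (rule V.independent_if_scalars_zero)
    show "finite (g ` T)" using finT by simp
  next
    fix u x assume su: "(\<Sum>x\<in>g ` T. sc (u x) x) = 0" and x: "x \<in> g ` T"
    then obtain t where t: "t \<in> T" "x = g t" by blast
    have "(\<Sum>s\<in>T. sc (u (g s)) (g s)) = 0" using su by (simp add: sum.reindex[OF ginj])
    then have "(\<Sum>s\<in>T. sc (u (g s)) (g s)) t = 0" by simp
    then have "(\<Sum>s\<in>T. u (g s) * g s t) = 0" by (simp add: sum_apply')
    moreover have "(\<Sum>s\<in>T. u (g s) * g s t) = u (g t)"
    proof -
      have "(\<Sum>s\<in>T. u (g s) * g s t) = u (g t) * g t t + (\<Sum>s\<in>T-{t}. u (g s) * g s t)"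
        using t finT by (simp add: sum.remove)
      also have "(\<Sum>s\<in>T-{t}. u (g s) * g s t) = 0" using gts t by (intro sum.neutral) auto
      finally show ?thesis using gtt t by simp
    qed
    ultimately show "u x = 0" using t by simp
  qed
  have dimH: "cdim H = card T"
    unfolding cdim_V
    using V.dim_unique[of "g ` T" H "card T"] gH Hspan gind card_image[OF ginj] by auto
  obtain B where B: "B \<subseteq> K" "V.independent B" "K \<subseteq> V.span B" "card B = V.dim K"
    using V.basis_exists[of K] by blast
  have finB: "finite B"
  proof -
    have "B \<subseteq> V.span ((\<lambda>i. \<lambda>j. if j = i then (1::'a) else 0) ` I)"
      using B(1) Cv vecs_span[OF finI] unfolding K_def by blast
    then show ?thesis using V.independent_span_bound[OF _ B(2)] finI by blast
  qed
  have disj: "g ` T \<inter> B = {}"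
  proof -
    { fix t assume "t \<in> T" "g t \<in> B"
      then have "g t t = 0" using B(1) unfolding K_def by auto
      then have False using gtt \<open>t \<in> T\<close> by simp }
    then show ?thesis by blast
  qed
  have allind: "V.independent (g ` T \<union> B)"
  proof (rule V.independent_if_scalars_zero)
    show "finite (g ` T \<union> B)" using finT finB by simp
  next
    fix u x assume su: "(\<Sum>x\<in>g ` T \<union> B. sc (u x) x) = 0" and x: "x \<in> g ` T \<union> B"
    have split: "(\<Sum>x\<in>g ` T \<union> B. sc (u x) x) = (\<Sum>x\<in>g ` T. sc (u x) x) + (\<Sum>x\<in>B. sc (u x) x)"
      using finT finB disj by (simp add: sum.union_disjoint)
    have uG: "u (g t) = 0" if t: "t \<in> T" for t
    proof -
      have "(\<Sum>x\<in>g ` T \<union> B. sc (u x) x) t = 0" using su by simp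
      then have "(\<Sum>x\<in>g ` T. sc (u x) x) t + (\<Sum>x\<in>B. sc (u x) x) t = 0" using split by simp
      moreover have "(\<Sum>x\<in>B. sc (u x) x) t = 0"
        unfolding sum_apply' using B(1) t unfolding K_def by (intro sum.neutral) auto
      moreover have "(\<Sum>x\<in>g ` T. sc (u x) x) t = (\<Sum>s\<in>T. u (g s) * g s t)"
        by (simp add: sum.reindex[OF ginj] sum_apply')
      moreover have "(\<Sum>s\<in>T. u (g s) * g s t) = u (g t) * g t t + (\<Sum>s\<in>T-{t}. u (g s) * g s t)"
        using t finT by (simp add: sum.remove)
      moreover have "(\<Sum>s\<in>T-{t}. u (g s) * g s t) = 0" using gts t by (intro sum.neutral) auto
      ultimately show ?thesis using gtt t by simp
    qed
    have "(\<Sum>x\<in>g ` T. sc (u x) x) = 0"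
      using uG by (intro sum.neutral) (auto simp: sc_def fun_eq_iff)
    then have sB: "(\<Sum>x\<in>B. sc (u x) x) = 0" using su split by simp
    show "u x = 0"
    proof (cases "x \<in> B")
      case True
      then show ?thesis using V.independentD[OF B(2) finB subset_refl sB] by blast
    next
      case False
      then show ?thesis using x uG by auto
    qed
  qed
  have allsub: "g ` T \<union> B \<subseteq> C" using gH HC B(1) unfolding K_def by auto
  have allspan: "C \<subseteq> V.span (g ` T \<union> B)"
  proof
    fix c assume c: "c \<in> C"
    have "c = proj c + (c - proj c)" by simp
    moreover have "proj c \<in> V.span (g ` T \<union> B)"
      using projspan V.span_mono[of "g ` T" "g ` T \<union> B"] by blast
    moreover have "c - proj c \<in> V.span (g ` T \<union> B)"
      using dec[OF c] B(3) V.span_mono[of B "g ` T \<union> B"] by blast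
    ultimately show "c \<in> V.span (g ` T \<union> B)" by (metis V.span_add)
  qed
  have "V.dim C = card (g ` T \<union> B)"
    using V.dim_unique[OF allsub allspan allind refl] .
  also have "\<dots> = card T + card B"
    using card_Un_disjoint[OF _ finB disj] finT card_image[OF ginj] by simp
  finally have dimC: "cdim C = card T + cdim K" using B(4) cdim_V by metis
  show ?thesis
  proof (intro exI conjI)
    show "T \<subseteq> I" by fact
    show "card T = cdim H" using dimH by simp
    show "\<forall>h\<in>H. (\<forall>i\<in>T. h i = 0) \<longrightarrow> h = 0" using Tinj by blast
    show "\<forall>c\<in>C. \<exists>h\<in>H. \<exists>x\<in>C. (\<forall>i\<in>T. x i = 0) \<and> c = h + x"
    proof
      fix c assume c: "c \<in> C"
      show "\<exists>h\<in>H. \<exists>x\<in>C. (\<forall>i\<in>T. x i = 0) \<and> c = h + x"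
        using dec[OF c] projH[of c] unfolding K_def by (intro bexI[of _ "proj c"] bexI[of _ "c - proj c"]) auto
    qed
    show "cdim {x\<in>C. \<forall>i\<in>T. x i = 0} = cdim C - cdim H"
      using dimC dimH unfolding K_def by simp
  qed
qed



lemma shorten_eq:
  assumes "lin_code I C"
  shows "shorten I C T = {x\<in>C. \<forall>i\<in>T. x i = 0}"
proof -
  have "(\<lambda>i. if i \<in> I - T then x i else 0) = x" if "x \<in> C" "\<forall>i\<in>T. x i = 0" for x
    using that assms unfolding lin_code_def vecs_def by (auto simp: fun_eq_iff)
  then show ?thesis unfolding shorten_def by (auto simp: image_iff)
qed

lemma short_props:
  fixes C :: "(nat \<Rightarrow> 'a::field) set"
  assumes lc: "lin_code I C" and TI: "T \<subseteq> I"
  shows "lin_code (I - T) {x\<in>C. \<forall>i\<in>T. x i = 0}"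
    and "min_dist (I - T) {x\<in>C. \<forall>i\<in>T. x i = 0} \<ge> min_dist I C"
proof -
  show "lin_code (I - T) {x\<in>C. \<forall>i\<in>T. x i = 0}"
    using lc unfolding lin_code_def vecs_def by auto
  have "wt (I - T) x = wt I x" if "\<forall>i\<in>T. x i = 0" for x :: "nat \<Rightarrow> 'a"
  proof -
    have "{i \<in> I - T. x i \<noteq> 0} = {i \<in> I. x i \<noteq> 0}" using that by auto
    then show ?thesis unfolding wt_def by simp
  qed
  then show "min_dist (I - T) {x\<in>C. \<forall>i\<in>T. x i = 0} \<ge> min_dist I C"
    unfolding min_dist_def by (intro INF_superset_mono) auto
qed

lemma e_ip_restr:
  assumes "\<forall>i\<in>T. x i = 0" "finite I" "T \<subseteq> I"
  shows "e_ip (I - T) x y = e_ip I x y"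
  unfolding e_ip_def using assms by (intro sum.mono_neutral_left) auto

lemma h_ip_restr:
  assumes "\<forall>i\<in>T. x i = 0" "finite I" "T \<subseteq> I"
  shows "h_ip q (I - T) x y = h_ip q I x y"
  unfolding h_ip_def using assms by (intro sum.mono_neutral_left) auto

lemma e_dual_sub: "V.subspace (e_dual I C)"
  unfolding V.subspace_def e_dual_def vecs_def e_ip_def
  by (auto simp: algebra_simps sum.distrib sum_distrib_left[symmetric])

lemma e_main:
  fixes C :: "(nat \<Rightarrow> 'a::field) set"
  assumes lc: "lin_code I C"
  shows "\<exists>T. T \<subseteq> I \<and> card T = cdim (C \<inter> e_dual I C) \<and>
                 lin_code (I - T) (shorten I C T) \<and>
                 card (I - T) = card I - cdim (C \<inter> e_dual I C) \<and>
                 cdim (shorten I C T) = cdim C - cdim (C \<inter> e_dual I C) \<and>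
                 e_LCD (I - T) (shorten I C T) \<and>
                 min_dist (I - T) (shorten I C T) \<ge> min_dist I C"
proof -
  let ?H = "C \<inter> e_dual I C"
  have Hs: "V.subspace ?H" using V.subspace_inter[OF lin_code_subspace[OF lc] e_dual_sub] .
  obtain T where TI: "T \<subseteq> I" and cT: "card T = cdim ?H"
    and Tinj: "\<forall>h\<in>?H. (\<forall>i\<in>T. h i = 0) \<longrightarrow> h = 0"
    and dec: "\<forall>c\<in>C. \<exists>h\<in>?H. \<exists>x\<in>C. (\<forall>i\<in>T. x i = 0) \<and> c = h + x"
    and dK: "cdim {x\<in>C. \<forall>i\<in>T. x i = 0} = cdim C - cdim ?H"
    using decomp[OF lc, of ?H] Hs by blast
  have finI: "finite I" using lc unfolding lin_code_def by simp
  have lcd: "e_LCD (I - T) {x\<in>C. \<forall>i\<in>T. x i = 0}"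
    unfolding e_LCD_def
  proof
    show "{0} \<subseteq> {x\<in>C. \<forall>i\<in>T. x i = 0} \<inter> e_dual (I - T) {x\<in>C. \<forall>i\<in>T. x i = 0}"
      using lc unfolding lin_code_def e_dual_def vecs_def e_ip_def by auto
    show "{x\<in>C. \<forall>i\<in>T. x i = 0} \<inter> e_dual (I - T) {x\<in>C. \<forall>i\<in>T. x i = 0} \<subseteq> {0}"
    proof
      fix y assume y: "y \<in> {x\<in>C. \<forall>i\<in>T. x i = 0} \<inter> e_dual (I - T) {x\<in>C. \<forall>i\<in>T. x i = 0}"
      have yC: "y \<in> C" and yT: "\<forall>i\<in>T. y i = 0" using y by auto
      have yv: "y \<in> vecs I" using yC lc unfolding lin_code_def by auto
      have "y \<in> e_dual I C" unfolding e_dual_def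
      proof (intro CollectI conjI ballI yv)
        fix c assume c: "c \<in> C"
        then obtain h x where h: "h \<in> ?H" and x: "x \<in> C" "\<forall>i\<in>T. x i = 0" and cx: "c = h + x"
          using dec by blast
        have "e_ip I h y = e_ip I y h" unfolding e_ip_def by (simp add: mult.commute)
        also have "\<dots> = 0" using h yC unfolding e_dual_def by auto
        finally have 1: "e_ip I h y = 0" .
        have "e_ip I x y = e_ip (I - T) x y" using e_ip_restr[OF x(2) finI TI] by simp
        also have "\<dots> = 0" using y x unfolding e_dual_def by auto
        finally have 2: "e_ip I x y = 0" .
        show "e_ip I c y = 0" using 1 2 unfolding cx e_ip_def by (simp add: algebra_simps sum.distrib)
      qed
      then have "y = 0" using Tinj yC yT by blast
      then show "y \<in> {0}" by simp
    qed
  qed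
  show ?thesis
    using TI cT short_props[OF lc TI] dK lcd shorten_eq[OF lc, of T] card_Diff_subset[OF finite_subset[OF TI finI] TI]
    by (intro exI[of _ T]) simp
qed

lemma h_main:
  fixes C :: "(nat \<Rightarrow> 'b::field) set"
  assumes lc: "lin_code I C" and pp: "prime_power q" and cardb: "card (UNIV :: 'b::field set) = q ^ 2"
  shows "\<exists>T. T \<subseteq> I \<and> card T = cdim (C \<inter> h_dual q I C) \<and>
                 lin_code (I - T) (shorten I C T) \<and>
                 card (I - T) = card I - cdim (C \<inter> h_dual q I C) \<and>
                 cdim (shorten I C T) = cdim C - cdim (C \<inter> h_dual q I C) \<and>
                 h_LCD q (I - T) (shorten I C T) \<and>
                 min_dist (I - T) (shorten I C T) \<ge> min_dist I C"
proof -
  note fr = frob_facts[OF pp cardb]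
  let ?H = "C \<inter> h_dual q I C"
  have hds: "V.subspace (h_dual q I C)"
    unfolding V.subspace_def
  proof (intro conjI ballI allI)
    show "0 \<in> h_dual q I C"
      using fr(3) unfolding h_dual_def vecs_def h_ip_def by (simp add: power_0_left)
  next
    fix c :: 'b and y assume y: "y \<in> h_dual q I C"
    have "(\<Sum>i\<in>I. x i * (c * y i) ^ q) = c ^ q * (\<Sum>i\<in>I. x i * y i ^ q)" for x :: "nat \<Rightarrow> 'b"
      by (simp add: sum_distrib_left power_mult_distrib algebra_simps)
    then show "sc c y \<in> h_dual q I C"
      using y unfolding h_dual_def vecs_def h_ip_def by (simp add: sc_def)
  next
    fix x y assume "x \<in> h_dual q I C" "y \<in> h_dual q I C"
    then show "x + y \<in> h_dual q I C"
      unfolding h_dual_def vecs_def h_ip_def by (auto simp: fr(4) algebra_simps sum.distrib)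
  qed
  have Hs: "V.subspace ?H" using V.subspace_inter[OF lin_code_subspace[OF lc] hds] .
  obtain T where TI: "T \<subseteq> I" and cT: "card T = cdim ?H"
    and Tinj: "\<forall>h\<in>?H. (\<forall>i\<in>T. h i = 0) \<longrightarrow> h = 0"
    and dec: "\<forall>c\<in>C. \<exists>h\<in>?H. \<exists>x\<in>C. (\<forall>i\<in>T. x i = 0) \<and> c = h + x"
    and dK: "cdim {x\<in>C. \<forall>i\<in>T. x i = 0} = cdim C - cdim ?H"
    using decomp[OF lc, of ?H] Hs by blast
  have finI: "finite I" using lc unfolding lin_code_def by simp
  have lcd: "h_LCD q (I - T) {x\<in>C. \<forall>i\<in>T. x i = 0}"
    unfolding h_LCD_def
  proof
    show "{0} \<subseteq> {x\<in>C. \<forall>i\<in>T. x i = 0} \<inter> h_dual q (I - T) {x\<in>C. \<forall>i\<in>T. x i = 0}"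
      using lc fr(3) unfolding lin_code_def h_dual_def vecs_def h_ip_def by (auto simp: power_0_left)
    show "{x\<in>C. \<forall>i\<in>T. x i = 0} \<inter> h_dual q (I - T) {x\<in>C. \<forall>i\<in>T. x i = 0} \<subseteq> {0}"
    proof
      fix y assume y: "y \<in> {x\<in>C. \<forall>i\<in>T. x i = 0} \<inter> h_dual q (I - T) {x\<in>C. \<forall>i\<in>T. x i = 0}"
      have yC: "y \<in> C" and yT: "\<forall>i\<in>T. y i = 0" using y by auto
      have yv: "y \<in> vecs I" using yC lc unfolding lin_code_def by auto
      have "y \<in> h_dual q I C" unfolding h_dual_def
      proof (intro CollectI conjI ballI yv)
        fix c assume c: "c \<in> C"
        then obtain h x where h: "h \<in> ?H" and x: "x \<in> C" "\<forall>i\<in>T. x i = 0" and cx: "c = h + x"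
          using dec by blast
        have 0: "h_ip q I y h = 0" using h yC unfolding h_dual_def by auto
        have "h_ip q I h y = (h_ip q I y h) ^ q"
        proof -
          have "(h_ip q I y h) ^ q = (\<Sum>i\<in>I. (y i * h i ^ q) ^ q)" unfolding h_ip_def by (rule fr(1))
          also have "\<dots> = (\<Sum>i\<in>I. y i ^ q * h i ^ (q^2))"
            by (simp add: power_mult_distrib power2_eq_square power_mult)
          also have "\<dots> = h_ip q I h y" unfolding h_ip_def fr(2) by (simp add: mult.commute)
          finally show ?thesis by simp
        qed
        then have 1: "h_ip q I h y = 0" using 0 fr(3) by simp
        have "h_ip q I x y = h_ip q (I - T) x y" using h_ip_restr[OF x(2) finI TI] by simp
        also have "\<dots> = 0" using y x unfolding h_dual_def by auto
        finally have 2: "h_ip q I x y = 0" .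
        show "h_ip q I c y = 0" using 1 2 unfolding cx h_ip_def by (simp add: algebra_simps sum.distrib)
      qed
      then have "y = 0" using Tinj yC yT by blast
      then show "y \<in> {0}" by simp
    qed
  qed
  show ?thesis
    using TI cT short_props[OF lc TI] dK lcd shorten_eq[OF lc, of T] card_Diff_subset[OF finite_subset[OF TI finI] TI]
    by (intro exI[of _ T]) simp
qed


theorem theorem3p2:
  fixes q :: nat
  assumes "prime_power q"
  shows "(card (UNIV :: 'a::field set) = q \<longrightarrow>
           (\<forall>(C :: (nat \<Rightarrow> 'a::field) set) n k d l.
              lin_code {..<n} C \<and> cdim C = k \<and> min_dist {..<n} C = d \<and>
              cdim (C \<inter> e_dual {..<n} C) = l \<longrightarrow>
              (\<exists>T. T \<subseteq> {..<n} \<and> card T = l \<and>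
                 lin_code ({..<n} - T) (shorten {..<n} C T) \<and>
                 card ({..<n} - T) = n - l \<and>
                 cdim (shorten {..<n} C T) = k - l \<and>
                 e_LCD ({..<n} - T) (shorten {..<n} C T) \<and>
                 min_dist ({..<n} - T) (shorten {..<n} C T) \<ge> d)))
       \<and> (card (UNIV :: 'b::field set) = q ^ 2 \<longrightarrow>
           (\<forall>(C :: (nat \<Rightarrow> 'b::field) set) n k d l.
              lin_code {..<n} C \<and> cdim C = k \<and> min_dist {..<n} C = d \<and>
              cdim (C \<inter> h_dual q {..<n} C) = l \<longrightarrow>
              (\<exists>T. T \<subseteq> {..<n} \<and> card T = l \<and>
                 lin_code ({..<n} - T) (shorten {..<n} C T) \<and>
                 card ({..<n} - T) = n - l \<and>
                 cdim (shorten {..<n} C T) = k - l \<and>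
                 h_LCD q ({..<n} - T) (shorten {..<n} C T) \<and>
                 min_dist ({..<n} - T) (shorten {..<n} C T) \<ge> d)))"
proof (intro conjI impI allI)
  fix C :: "(nat \<Rightarrow> 'a::field) set" and n k d l
  assume "lin_code {..<n} C \<and> cdim C = k \<and> min_dist {..<n} C = d \<and> cdim (C \<inter> e_dual {..<n} C) = l"
  then show "\<exists>T. T \<subseteq> {..<n} \<and> card T = l \<and>
                 lin_code ({..<n} - T) (shorten {..<n} C T) \<and>
                 card ({..<n} - T) = n - l \<and>
                 cdim (shorten {..<n} C T) = k - l \<and>
                 e_LCD ({..<n} - T) (shorten {..<n} C T) \<and>
                 min_dist ({..<n} - T) (shorten {..<n} C T) \<ge> d"
    using e_main[of "{..<n}" C] by auto
next
  fix C :: "(nat \<Rightarrow> 'b::field) set" and n k d l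
  assume "card (UNIV :: 'b::field set) = q ^ 2"
    and "lin_code {..<n} C \<and> cdim C = k \<and> min_dist {..<n} C = d \<and> cdim (C \<inter> h_dual q {..<n} C) = l"
  then show "\<exists>T. T \<subseteq> {..<n} \<and> card T = l \<and>
                 lin_code ({..<n} - T) (shorten {..<n} C T) \<and>
                 card ({..<n} - T) = n - l \<and>
                 cdim (shorten {..<n} C T) = k - l \<and>
                 h_LCD q ({..<n} - T) (shorten {..<n} C T) \<and>
                 min_dist ({..<n} - T) (shorten {..<n} C T) \<ge> d"
    using h_main[of "{..<n}" C q] assms by auto
qed

end
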